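(* Let $A=(i_1,\dots,i_a)$ be an ordered tuple of distinct elements of $I_d$, $\alpha\in\mathbb{Z}_2^{a,\mathrm{ev}}$, and $r\ge0$. Then the X-cycle $A^{(r,\alpha)}$ commutes with every $x_j$, $j\in I_d$; i.e. it lies in the centralizer $\mathcal{C}_X$ of the polynomial subalgebra of $\mathcal{G}$.
   Context: Fix a commutative ring $R$ and integers $l,d\ge1$; $I_a=\{1,\dots,a\}$. Let $\mathcal{G}$ be the $R$-superalgebra that is free as an $R$-module with basis $\{x_1^{m_1}\cdots x_d^{m_d}\,w\,c_1^{e_1}\cdots c_d^{e_d}: 0\le m_i\le l-1,\ w\in\Sigma_d,\ e_i\in\{0,1\}\}$, with multiplication determined by: the $x_i$ commute and $x_i^l=0$; $w\in\Sigma_d$ multiply as in the symmetric group (composition right to left); $c_i^2=1$, $c_ic_j=-c_jc_i$ for $i\ne j$; $wx_i=x_{w(i)}w$, $wc_i=c_{w(i)}w$; $x_ic_i=-c_ix_i$, $x_ic_j=c_jx_i$ for $i\ne j$. For an ordered tuple $A=(i_1,\dots,i_a)$ of distinct elements of $I_d$, $\sigma_A$ is the cycle $i_1\mapsto i_2\mapsto\dots\mapsto i_a\mapsto i_1$. For $\alpha\in\mathbb{Z}_2^a$: $|\alpha|=\sum_j\alpha_j$; $\mathbb{Z}_2^{a,\mathrm{ev}}$ is the set of $\alpha$ with $|\alpha|$ even; $c_\alpha(A)=c_{i_1}^{\alpha_1}\cdots c_{i_a}^{\alpha_a}$; $\epsilon^\alpha_j=\prod_{k<j}(-1)^{\alpha_k}$.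 For $r\ge0$, $\alpha\in\mathbb{Z}_2^{a,\mathrm{ev}}$: $h^\alpha_r(A)=\sum_{r_1+\dots+r_a=(a-1)(l-1)+r,\ r_j\ge0}\prod_j(\epsilon^\alpha_jx_{i_j})^{r_j}$ and $A^{(r,\alpha)}=h^\alpha_r(A)\sigma_Ac_\alpha(A)$. *)

theory Defs
  imports "HOL-Combinatorics.Combinatorics"
begin

(* Basis elements x^m w c^e of the superalgebra G, encoded as triples (m, w, e)
   with m : exponent vector, w : permutation of {1..d}, e : parity vector. *)
type_synonym gbasis = "(nat \<Rightarrow> nat) \<times> (nat \<Rightarrow> nat) \<times> (nat \<Rightarrow> bool)"

definition gB :: "nat \<Rightarrow> nat \<Rightarrow> gbasis set" where
  "gB l d = {(m, w, e). (\<forall>i. i \<notin> {1..d} \<longrightarrow> m i = 0) \<and> (\<forall>i\<in>{1..d}. m i < l)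
      \<and> w permutes {1..d} \<and> (\<forall>i. i \<notin> {1..d} \<longrightarrow> \<not> e i)}"

(* number of inversions of a word; c_{j_1}...c_{j_k} = (-1)^inv * c^{parity} *)
definition inversions :: "nat list \<Rightarrow> nat" where
  "inversions L = card {(p, q). p < q \<and> q < length L \<and> L ! q < L ! p}"

(* product of two basis elements: (sign, basis element); sign 0 if some x_i^l appears *)
definition bprod :: "nat \<Rightarrow> nat \<Rightarrow> gbasis \<Rightarrow> gbasis \<Rightarrow> int \<times> gbasis" where
  "bprod l d b1 b2 = (case b1 of (m, w, e) \<Rightarrow> case b2 of (m', w', e') \<Rightarrow>
     let s1 = (-1::int) ^ (\<Sum>i\<in>{1..d}. if e i then m' i else 0);
         m'' = (\<lambda>k. m k + m' (inv w k));
         L = map (inv w') (filter e [1..<d+1]) @ filter e' [1..<d+1];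
         s2 = (-1::int) ^ inversions L;
         e'' = (\<lambda>k. e (w' k) \<noteq> e' k);
         ok = (\<forall>k\<in>{1..d}. m'' k < l)
     in (if ok then s1 * s2 else 0, (m'', w \<circ> w', e'')))"

(* elements of G: coefficient functions on the basis (zero outside gB l d) *)
definition gmul :: "nat \<Rightarrow> nat \<Rightarrow> (gbasis \<Rightarrow> 'r::comm_ring_1) \<Rightarrow> (gbasis \<Rightarrow> 'r) \<Rightarrow> (gbasis \<Rightarrow> 'r)" where
  "gmul l d f g = (\<lambda>b. \<Sum>b1\<in>gB l d. \<Sum>b2\<in>gB l d.
      if snd (bprod l d b1 b2) = b then of_int (fst (bprod l d b1 b2)) * f b1 * g b2 else 0)"

definition gsmul :: "'r::comm_ring_1 \<Rightarrow> (gbasis \<Rightarrow> 'r) \<Rightarrow> (gbasis \<Rightarrow> 'r)" where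
  "gsmul c f = (\<lambda>b. c * f b)"

(* the element x^m w c^e (zero if it is not a basis element, e.g. some m_i >= l) *)
definition gmono :: "nat \<Rightarrow> nat \<Rightarrow> gbasis \<Rightarrow> (gbasis \<Rightarrow> 'r::comm_ring_1)" where
  "gmono l d b = (\<lambda>b'. if b \<in> gB l d \<and> b' = b then 1 else 0)"

definition gone :: "nat \<Rightarrow> nat \<Rightarrow> (gbasis \<Rightarrow> 'r::comm_ring_1)" where
  "gone l d = gmono l d (\<lambda>_. 0, id, \<lambda>_. False)"

definition gx :: "nat \<Rightarrow> nat \<Rightarrow> nat \<Rightarrow> (gbasis \<Rightarrow> 'r::comm_ring_1)" where
  "gx l d i = gmono l d (\<lambda>k. if k = i then 1 else 0, id, \<lambda>_. False)"

definition gc :: "nat \<Rightarrow> nat \<Rightarrow> nat \<Rightarrow> (gbasis \<Rightarrow> 'r::comm_ring_1)" where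
  "gc l d i = gmono l d (\<lambda>_. 0, id, \<lambda>k. k = i)"

definition gperm :: "nat \<Rightarrow> nat \<Rightarrow> (nat \<Rightarrow> nat) \<Rightarrow> (gbasis \<Rightarrow> 'r::comm_ring_1)" where
  "gperm l d w = gmono l d (\<lambda>_. 0, w, \<lambda>_. False)"

definition gpow :: "nat \<Rightarrow> nat \<Rightarrow> (gbasis \<Rightarrow> 'r::comm_ring_1) \<Rightarrow> nat \<Rightarrow> (gbasis \<Rightarrow> 'r)" where
  "gpow l d f n = (gmul l d f ^^ n) (gone l d)"

definition gprod_list :: "nat \<Rightarrow> nat \<Rightarrow> (gbasis \<Rightarrow> 'r::comm_ring_1) list \<Rightarrow> (gbasis \<Rightarrow> 'r)" where
  "gprod_list l d fs = foldr (gmul l d) fs (gone l d)"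

(* epsilon^alpha_j (0-indexed j): product over k < j of (-1)^alpha_k *)
definition eps :: "bool list \<Rightarrow> nat \<Rightarrow> 'r::comm_ring_1" where
  "eps \<alpha> j = (-1) ^ length (filter id (take j \<alpha>))"

definition hpoly :: "nat \<Rightarrow> nat \<Rightarrow> nat list \<Rightarrow> bool list \<Rightarrow> nat \<Rightarrow> (gbasis \<Rightarrow> 'r::comm_ring_1)" where
  "hpoly l d A \<alpha> r = (\<lambda>b. \<Sum>rs\<in>{rs. length rs = length A \<and> sum_list rs = (length A - 1) * (l - 1) + r}.
      gprod_list l d (map (\<lambda>j. gpow l d (gsmul (eps \<alpha> j) (gx l d (A ! j))) (rs ! j)) [0..<length A]) b)"

definition calpha :: "nat \<Rightarrow> nat \<Rightarrow> nat list \<Rightarrow> bool list \<Rightarrow> (gbasis \<Rightarrow> 'r::comm_ring_1)" where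
  "calpha l d A \<alpha> = gprod_list l d (map (\<lambda>j. if \<alpha> ! j then gc l d (A ! j) else gone l d) [0..<length A])"

(* A^{(r,alpha)} = h^alpha_r(A) sigma_A c_alpha(A); sigma_A = cycle i_1 -> i_2 -> ... -> i_a -> i_1 *)
definition Xcycle :: "nat \<Rightarrow> nat \<Rightarrow> nat list \<Rightarrow> nat \<Rightarrow> bool list \<Rightarrow> (gbasis \<Rightarrow> 'r::comm_ring_1)" where
  "Xcycle l d A r \<alpha> = gmul l d (gmul l d (hpoly l d A \<alpha> r) (gperm l d (cycle_of_list A))) (calpha l d A \<alpha>)"

end

theory Submission
  imports Defs
begin


lemma finite_gB: "finite (gB l d)"
proof -
  have "gB l d \<subseteq> {m. \<forall>x. (x \<in> {1..d} \<longrightarrow> m x \<in> {..<l}) \<and> (x \<notin> {1..d} \<longrightarrow> m x = 0)}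
     \<times> {w. w permutes {1..d}} \<times> {e. \<forall>x. (x \<in> {1..d} \<longrightarrow> e x \<in> UNIV) \<and> (x \<notin> {1..d} \<longrightarrow> e x = False)}"
    by (auto simp: gB_def)
  moreover have "finite \<dots>"
    by (intro finite_cartesian_product finite_set_of_finite_funs finite_permutations) auto
  ultimately show ?thesis by (rule finite_subset)
qed

lemma sum_if_const: "(\<Sum>x\<in>S. if P then f x else 0) = (if P then sum f S else 0)"
  by (cases P) auto

lemma gmul_mono:
  assumes "b1 \<in> gB l d" "b2 \<in> gB l d"
  shows "gmul l d (gmono l d b1 :: gbasis \<Rightarrow> 'r::comm_ring_1) (gmono l d b2)
     = gsmul (of_int (fst (bprod l d b1 b2))) (gmono l d (snd (bprod l d b1 b2)))"
proof -
  have in_gB: "snd (bprod l d b1 b2) \<in> gB l d" if "fst (bprod l d b1 b2) \<noteq> 0"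
  proof -
    obtain m w e m' w' e' where b: "b1 = (m,w,e)" "b2 = (m',w',e')" by (cases b1, cases b2) auto
    have wp: "w permutes {1..d}" "w' permutes {1..d}" using assms b by (auto simp: gB_def)
    have iw: "inv w i = i" if "i \<notin> {1..d}" for i
      using permutes_inv[OF wp(1)] that by (simp add: permutes_not_in)
    have ok: "\<forall>k\<in>{1..d}. m k + m' (inv w k) < l"
      using that b by (auto simp: bprod_def Let_def split: if_splits)
    have m1: "\<forall>i. i \<notin> {1..d} \<longrightarrow> m i = 0" "\<forall>i. i \<notin> {1..d} \<longrightarrow> m' i = 0"
      "\<forall>i. i \<notin> {1..d} \<longrightarrow> \<not> e i" "\<forall>i. i \<notin> {1..d} \<longrightarrow> \<not> e' i"
      using assms b by (auto simp: gB_def)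
    have ww: "w' i = i" if "i \<notin> {1..d}" for i using wp(2) that by (simp add: permutes_not_in)
    show ?thesis unfolding b bprod_def Let_def gB_def
      using ok m1 iw ww permutes_compose[OF wp(2) wp(1)] by auto
qed
  show ?thesis
  proof
    fix b
    let ?P = "bprod l d b1 b2"
    have "gmul l d (gmono l d b1 :: gbasis \<Rightarrow> 'r) (gmono l d b2) b
      = (\<Sum>c1\<in>gB l d. \<Sum>c2\<in>gB l d. if c1 = b1 then (if c2 = b2 then
           (if snd ?P = b then of_int (fst ?P) else 0) else 0) else 0)"
      unfolding gmul_def gmono_def by (intro sum.cong refl) (auto simp: assms)
    also have "\<dots> = (if snd ?P = b then of_int (fst ?P) else 0)"
      using assms by (simp add: sum_if_const sum.delta finite_gB)
    also have "\<dots> = gsmul (of_int (fst ?P)) (gmono l d (snd ?P)) b"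
      unfolding gsmul_def gmono_def using in_gB by (cases "fst ?P = 0") auto
    finally show "gmul l d (gmono l d b1 :: gbasis \<Rightarrow> 'r) (gmono l d b2) b = gsmul (of_int (fst ?P)) (gmono l d (snd ?P)) b" .
  qed
qed

lemma gmul_mono0:
  assumes "b1 \<notin> gB l d \<or> b2 \<notin> gB l d"
  shows "gmul l d (gmono l d b1 :: gbasis \<Rightarrow> 'r::comm_ring_1) (gmono l d b2) = (\<lambda>_. 0)"
  using assms unfolding gmul_def gmono_def by (auto intro!: ext sum.neutral)



lemma if_sum0: "(if P then (\<Sum>i\<in>I. f i) else 0) = (\<Sum>i\<in>I. if P then f i else 0)"
  by auto

lemma gmul_sum_left:
  "gmul l d (\<lambda>b. \<Sum>i\<in>I. f i b) g = (\<lambda>b. \<Sum>i\<in>I. gmul l d (f i) g b)"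
proof
  fix b
  have "gmul l d (\<lambda>b. \<Sum>i\<in>I. f i b) g b = (\<Sum>b1\<in>gB l d. \<Sum>b2\<in>gB l d. \<Sum>i\<in>I.
     if snd (bprod l d b1 b2) = b then of_int (fst (bprod l d b1 b2)) * f i b1 * g b2 else 0)"
    unfolding gmul_def by (intro sum.cong refl) (auto simp: sum_distrib_left sum_distrib_right mult.assoc)
  also have "\<dots> = (\<Sum>i\<in>I. \<Sum>b1\<in>gB l d. \<Sum>b2\<in>gB l d.
     if snd (bprod l d b1 b2) = b then of_int (fst (bprod l d b1 b2)) * f i b1 * g b2 else 0)"
    by (simp add: sum.swap[of _ I])
  finally show "gmul l d (\<lambda>b. \<Sum>i\<in>I. f i b) g b = (\<Sum>i\<in>I. gmul l d (f i) g b)"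
    unfolding gmul_def .
qed

lemma gmul_sum_right:
  "gmul l d f (\<lambda>b. \<Sum>i\<in>I. g i b) = (\<lambda>b. \<Sum>i\<in>I. gmul l d f (g i) b)"
proof
  fix b
  have "gmul l d f (\<lambda>b. \<Sum>i\<in>I. g i b) b = (\<Sum>b1\<in>gB l d. \<Sum>b2\<in>gB l d. \<Sum>i\<in>I.
     if snd (bprod l d b1 b2) = b then of_int (fst (bprod l d b1 b2)) * f b1 * g i b2 else 0)"
    unfolding gmul_def by (intro sum.cong refl) (auto simp: sum_distrib_left sum_distrib_right mult.assoc)
  also have "\<dots> = (\<Sum>i\<in>I. \<Sum>b1\<in>gB l d. \<Sum>b2\<in>gB l d.
     if snd (bprod l d b1 b2) = b then of_int (fst (bprod l d b1 b2)) * f b1 * g i b2 else 0)"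
    by (simp add: sum.swap[of _ I])
  finally show "gmul l d f (\<lambda>b. \<Sum>i\<in>I. g i b) b = (\<Sum>i\<in>I. gmul l d f (g i) b)"
    unfolding gmul_def .
qed

lemma gmul_zero_left[simp]: "gmul l d (\<lambda>_. 0) (g :: gbasis \<Rightarrow> 'r::comm_ring_1) = (\<lambda>_. 0)"
  unfolding gmul_def by (rule ext) (simp only: mult_zero_right mult_zero_left, simp)

lemma gmul_zero_right[simp]: "gmul l d (f :: gbasis \<Rightarrow> 'r::comm_ring_1) (\<lambda>_. 0) = (\<lambda>_. 0)"
  unfolding gmul_def by (rule ext) (simp only: mult_zero_right mult_zero_left, simp)

lemma gmul_smul_left: "gmul l d (gsmul c f) g = gsmul c (gmul l d f g)"
  unfolding gmul_def gsmul_def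
  by (auto simp: sum_distrib_left if_distrib sum_if_const mult_ac intro!: ext sum.cong)

lemma gmul_smul_right: "gmul l d f (gsmul c g) = gsmul c (gmul l d f g)"
  unfolding gmul_def gsmul_def
  by (auto simp: sum_distrib_left if_distrib sum_if_const mult_ac intro!: ext sum.cong)

lemma gsmul_gsmul: "gsmul a (gsmul b f) = gsmul (a * b) f"
  unfolding gsmul_def by (auto simp: mult_ac)

lemma inversions_sorted: "sorted L \<Longrightarrow> inversions L = 0"
proof -
  assume "sorted L"
  then have E: "{(p, q). p < q \<and> q < length L \<and> L ! q < L ! p} = {}"
    by (auto simp: sorted_iff_nth_mono) (meson leD less_imp_le_nat)
  show ?thesis unfolding inversions_def by (simp only: E card.empty)
qed



lemma gmono_notin: "b \<notin> gB l d \<Longrightarrow> gmono l d b = (\<lambda>_. 0)"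
  unfolding gmono_def by auto

lemma gsmul_1[simp]: "gsmul 1 f = f" and gsmul_0[simp]: "gsmul 0 f = (\<lambda>_. 0)"
  unfolding gsmul_def by auto

lemma gB_iff: "(m, w, e) \<in> gB l d \<longleftrightarrow> (\<forall>i. i \<notin> {1..d} \<longrightarrow> m i = 0) \<and> (\<forall>i\<in>{1..d}. m i < l)
      \<and> w permutes {1..d} \<and> (\<forall>i. i \<notin> {1..d} \<longrightarrow> \<not> e i)"
  unfolding gB_def by auto

lemma xmul:
  "gmul l d (gmono l d (m, id, \<lambda>_. False) :: gbasis \<Rightarrow> 'r::comm_ring_1) (gmono l d (m', id, \<lambda>_. False))
   = gmono l d (\<lambda>k. m k + m' k, id, \<lambda>_. False)"
proof (cases "(m, id, \<lambda>_. False) \<in> gB l d \<and> (m', id, \<lambda>_::nat. False) \<in> gB l d")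
  case True
  have bp: "bprod l d (m, id, \<lambda>_. False) (m', id, \<lambda>_. False) =
     (if \<forall>k\<in>{1..d}. m k + m' k < l then 1 else 0, (\<lambda>k. m k + m' k, id, \<lambda>_. False))"
    by (simp add: bprod_def Let_def inversions_def)
  show ?thesis
  proof (cases "\<forall>k\<in>{1..d}. m k + m' k < l")
    case True2: True
    then show ?thesis using True by (simp add: gmul_mono bp)
  next
    case False
    then have "(\<lambda>k. m k + m' k, id, \<lambda>_::nat. False) \<notin> gB l d" by (auto simp: gB_iff)
    then show ?thesis using True False by (simp add: gmul_mono bp gmono_notin)
  qed
next
  case False
  then have "(\<lambda>k. m k + m' k, id, \<lambda>_::nat. False) \<notin> gB l d" 
    by (auto simp: gB_iff) (metis add_lessD1 atLeastAtMost_iff, metis add_lessD1 add.commute atLeastAtMost_iff)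
  then show ?thesis using False by (simp add: gmul_mono0 gmono_notin)
qed

lemma mul_perm:
  assumes "\<sigma> permutes {1..d}" "l \<ge> 1"
  shows "gmul l d (gmono l d (m, id, \<lambda>_. False) :: gbasis \<Rightarrow> 'r::comm_ring_1) (gmono l d (\<lambda>_. 0, \<sigma>, \<lambda>_. False))
   = gmono l d (m, \<sigma>, \<lambda>_. False)"
proof (cases "(m, id, \<lambda>_. False) \<in> gB l d")
  case True
  have bp: "bprod l d (m, id, \<lambda>_. False) (\<lambda>_. 0, \<sigma>, \<lambda>_. False) = (1, (m, \<sigma>, \<lambda>_. False))"
    using True by (simp add: bprod_def Let_def inversions_def gB_iff)
  have "(\<lambda>_::nat. 0::nat, \<sigma>, \<lambda>_::nat. False) \<in> gB l d" using assms by (auto simp: gB_iff)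
  then show ?thesis using True by (simp add: gmul_mono bp)
next
  case False
  then have "(m, \<sigma>, \<lambda>_::nat. False) \<notin> gB l d" by (auto simp: gB_iff)
  then show ?thesis using False by (simp add: gmul_mono0 gmono_notin)
qed

lemma sorted_filter_upt: "sorted (filter P [a..<b])"
  by (rule sorted_wrt_filter) simp

lemma inv_filter_upt: "inversions (filter P [a..<b]) = 0"
  by (rule inversions_sorted[OF sorted_filter_upt])

lemma mul_c:
  assumes "\<sigma> permutes {1..d}" "l \<ge> 1" "\<forall>i. i \<notin> {1..d} \<longrightarrow> \<not> E i"
  shows "gmul l d (gmono l d (m, \<sigma>, \<lambda>_. False) :: gbasis \<Rightarrow> 'r::comm_ring_1) (gmono l d (\<lambda>_. 0, id, E))
   = gmono l d (m, \<sigma>, E)"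
proof (cases "(m, \<sigma>, \<lambda>_. False) \<in> gB l d")
  case True
  have bp: "bprod l d (m, \<sigma>, \<lambda>_. False) (\<lambda>_. 0, id, E) = (1, (m, \<sigma>, E))"
    using True by (simp add: bprod_def Let_def inv_filter_upt gB_iff del: upt_Suc)
  have "(\<lambda>_::nat. 0::nat, id, E) \<in> gB l d" using assms by (auto simp: gB_iff)
  then show ?thesis using True by (simp add: gmul_mono bp)
next
  case False
  then have "(m, \<sigma>, E) \<notin> gB l d" using assms by (auto simp: gB_iff)
  then show ?thesis using False by (simp add: gmul_mono0 gmono_notin)
qed

lemma mul_cc:
  assumes "l \<ge> 1" "\<forall>i. i \<notin> {1..d} \<longrightarrow> \<not> e i" "\<forall>i. i \<notin> {1..d} \<longrightarrow> \<not> e' i"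
  shows "\<exists>s. gmul l d (gmono l d (\<lambda>_. 0, id, e) :: gbasis \<Rightarrow> 'r::comm_ring_1) (gmono l d (\<lambda>_. 0, id, e'))
   = gsmul s (gmono l d (\<lambda>_. 0, id, \<lambda>k. e k \<noteq> e' k))"
proof -
  have i1: "(\<lambda>_::nat. 0::nat, id, e) \<in> gB l d" "(\<lambda>_::nat. 0::nat, id, e') \<in> gB l d"
    using assms by (auto simp: gB_iff)
  have "snd (bprod l d (\<lambda>_. 0, id, e) (\<lambda>_. 0, id, e')) = (\<lambda>_. 0, id, \<lambda>k. e k \<noteq> e' k)"
    by (simp add: bprod_def Let_def)
  then show ?thesis using gmul_mono[OF i1, where 'r='r] by auto
qed



lemma gsmul_zero[simp]: "gsmul c (\<lambda>_. 0) = (\<lambda>_. 0)"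
  unfolding gsmul_def by simp


lemma mul_x_right:
  assumes "\<sigma> permutes {1..d}" "j \<in> {1..d}" "\<forall>i. i \<notin> {1..d} \<longrightarrow> \<not> E i"
  shows "gmul l d (gmono l d (m, \<sigma>, E) :: gbasis \<Rightarrow> 'r::comm_ring_1) (gx l d j)
   = gsmul ((-1) ^ (if E j then 1 else 0)) (gmono l d (\<lambda>k. m k + (if k = \<sigma> j then 1 else 0), \<sigma>, E))"
proof (cases "(m, \<sigma>, E) \<in> gB l d \<and> (\<lambda>k. if k = j then 1 else 0, id, \<lambda>_::nat. False) \<in> gB l d")
  case True
  have s1: "(\<Sum>i = Suc 0..d. if E i then if i = j then Suc 0 else 0 else 0) = (if E j then 1 else (0::nat))"
  proof -
    have "(\<Sum>i = Suc 0..d. if E i then if i = j then Suc 0 else 0 else 0)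
       = (\<Sum>i = Suc 0..d. if i = j then (if E j then 1 else 0) else 0)"
      by (intro sum.cong) auto
    also have "\<dots> = (if E j then 1 else 0)" using assms(2) by (simp add: sum.delta)
    finally show ?thesis .
  qed
  have iv: "(inv \<sigma> k = j) = (k = \<sigma> j)" for k
    using assms(1) by (metis permutes_inverses(1) permutes_inverses(2))
  have bp: "bprod l d (m, \<sigma>, E) (\<lambda>k. if k = j then 1 else 0, id, \<lambda>_. False)
     = (if \<forall>k\<in>{1..d}. m k + (if k = \<sigma> j then 1 else 0) < l then (-1) ^ (if E j then 1 else 0) else 0,
        (\<lambda>k. m k + (if k = \<sigma> j then 1 else 0), \<sigma>, E))"
    unfolding bprod_def Let_def
    by (simp add: s1 iv inv_filter_upt cong: if_cong del: upt_Suc)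
  show ?thesis
  proof (cases "\<forall>k\<in>{1..d}. m k + (if k = \<sigma> j then 1 else 0) < l")
    case True2: True
    then show ?thesis using True unfolding gx_def by (simp add: gmul_mono bp)
  next
    case False
    then have "(\<lambda>k. m k + (if k = \<sigma> j then 1 else 0), \<sigma>, E) \<notin> gB l d" by (auto simp: gB_iff)
    then show ?thesis using True False unfolding gx_def by (simp add: gmul_mono bp gmono_notin)
  qed
next
  case False
  have sj: "\<sigma> j \<in> {1..d}" using assms(2) permutes_in_image[OF assms(1), of j] by blast
  from False have "(\<lambda>k. m k + (if k = \<sigma> j then 1 else 0), \<sigma>, E) \<notin> gB l d"
    using assms sj by (auto simp: gB_iff split: if_splits) (metis le_trans not_less_eq_eq, metis le_trans not_less_eq_eq, metis Suc_lessD atLeastAtMost_iff)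
  moreover have "gmul l d (gmono l d (m, \<sigma>, E) :: gbasis \<Rightarrow> 'r::comm_ring_1) (gx l d j) = (\<lambda>_. 0)"
    unfolding gx_def by (rule gmul_mono0) (use False in auto)
  ultimately show ?thesis by (simp add: gmono_notin)
qed

lemma mul_x_left:
  assumes "\<sigma> permutes {1..d}" "j \<in> {1..d}" "\<forall>i. i \<notin> {1..d} \<longrightarrow> \<not> E i"
  shows "gmul l d (gx l d j :: gbasis \<Rightarrow> 'r::comm_ring_1) (gmono l d (m, \<sigma>, E))
   = gmono l d (\<lambda>k. m k + (if k = j then 1 else 0), \<sigma>, E)"
proof (cases "(m, \<sigma>, E) \<in> gB l d \<and> (\<lambda>k. if k = j then 1 else 0, id, \<lambda>_::nat. False) \<in> gB l d")
  case True
  have bp: "bprod l d (\<lambda>k. if k = j then 1 else 0, id, \<lambda>_. False) (m, \<sigma>, E)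
     = (if \<forall>k\<in>{1..d}. m k + (if k = j then 1 else 0) < l then 1 else 0,
        (\<lambda>k. m k + (if k = j then 1 else 0), \<sigma>, E))"
    unfolding bprod_def Let_def
    by (simp add: inv_filter_upt add.commute cong: if_cong del: upt_Suc)
  show ?thesis
  proof (cases "\<forall>k\<in>{1..d}. m k + (if k = j then 1 else 0) < l")
    case True2: True
    then show ?thesis using True unfolding gx_def by (simp add: gmul_mono bp)
  next
    case False
    then have "(\<lambda>k. m k + (if k = j then 1 else 0), \<sigma>, E) \<notin> gB l d" by (auto simp: gB_iff)
    then show ?thesis using True False unfolding gx_def by (simp add: gmul_mono bp gmono_notin)
  qed
next
  case False
  from False have "(\<lambda>k. m k + (if k = j then 1 else 0), \<sigma>, E) \<notin> gB l d"
    using assms by (auto simp: gB_iff split: if_splits) (metis Suc_lessD atLeastAtMost_iff)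
  moreover have "gmul l d (gx l d j :: gbasis \<Rightarrow> 'r::comm_ring_1) (gmono l d (m, \<sigma>, E)) = (\<lambda>_. 0)"
    unfolding gx_def by (rule gmul_mono0) (use False in auto)
  ultimately show ?thesis by (simp add: gmono_notin)
qed



lemma gpow_x:
  "gpow l d (gsmul c (gx l d i) :: gbasis \<Rightarrow> 'r::comm_ring_1) n
   = gsmul (c ^ n) (gmono l d (\<lambda>k. n * (if k = i then 1 else 0), id, \<lambda>_. False))"
proof (induction n)
  case 0
  show ?case unfolding gpow_def gone_def by (simp add: id_def)
next
  case (Suc n)
  have "gpow l d (gsmul c (gx l d i) :: gbasis \<Rightarrow> 'r) (Suc n)
     = gmul l d (gsmul c (gx l d i)) (gpow l d (gsmul c (gx l d i)) n)"
    unfolding gpow_def by simp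
  also have "\<dots> = gsmul (c * c ^ n) (gmul l d (gx l d i) (gmono l d (\<lambda>k. n * (if k = i then 1 else 0), id, \<lambda>_. False)))"
    unfolding Suc by (simp add: gmul_smul_left gmul_smul_right gsmul_gsmul mult_ac)
  also have "\<dots> = gsmul (c ^ Suc n) (gmono l d (\<lambda>k. Suc n * (if k = i then 1 else 0), id, \<lambda>_. False))"
    unfolding gx_def xmul by simp
  finally show ?case .
qed

lemma gprod_x:
  "gprod_list l d (map (\<lambda>j. gsmul (c j) (gmono l d (m j, id, \<lambda>_. False))) xs :: (gbasis \<Rightarrow> 'r::comm_ring_1) list)
   = gsmul (prod_list (map c xs)) (gmono l d (\<lambda>k. \<Sum>j\<leftarrow>xs. m j k, id, \<lambda>_. False))"
proof (induction xs)
  case Nil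
  show ?case unfolding gprod_list_def gone_def by (simp add: id_def)
next
  case (Cons x xs)
  have "gprod_list l d (map (\<lambda>j. gsmul (c j) (gmono l d (m j, id, \<lambda>_. False))) (x # xs) :: (gbasis \<Rightarrow> 'r) list)
     = gmul l d (gsmul (c x) (gmono l d (m x, id, \<lambda>_. False)))
         (gprod_list l d (map (\<lambda>j. gsmul (c j) (gmono l d (m j, id, \<lambda>_. False))) xs))"
    unfolding gprod_list_def by simp
  also have "\<dots> = gsmul (prod_list (map c (x # xs))) (gmono l d (\<lambda>k. \<Sum>j\<leftarrow>x # xs. m j k, id, \<lambda>_. False))"
    unfolding Cons by (simp add: gmul_smul_left gmul_smul_right gsmul_gsmul xmul mult_ac)
  finally show ?case .
qed

definition Mf :: "nat list \<Rightarrow> nat list \<Rightarrow> nat \<Rightarrow> nat" where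
  "Mf A rs = (\<lambda>k. \<Sum>j\<leftarrow>[0..<length A]. rs ! j * (if k = A ! j then 1 else 0))"

definition coef :: "nat list \<Rightarrow> bool list \<Rightarrow> nat list \<Rightarrow> 'r::comm_ring_1" where
  "coef A \<alpha> rs = prod_list (map (\<lambda>j. eps \<alpha> j ^ (rs ! j)) [0..<length A])"


lemma hpoly_eq:
  "(hpoly l d A \<alpha> r :: gbasis \<Rightarrow> 'r::comm_ring_1) = (\<lambda>b. \<Sum>rs\<in>{rs. length rs = length A \<and> sum_list rs = (length A - 1) * (l - 1) + r}.
      gsmul (coef A \<alpha> rs) (gmono l d (Mf A rs, id, \<lambda>_. False)) b)"
proof -
  have "(gprod_list l d (map (\<lambda>j. gpow l d (gsmul (eps \<alpha> j) (gx l d (A ! j))) (rs ! j)) [0..<length A]) :: gbasis \<Rightarrow> 'r)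
     = gsmul (coef A \<alpha> rs) (gmono l d (Mf A rs, id, \<lambda>_. False)) " for rs
  proof -
    have eq: "(map (\<lambda>j. gpow l d (gsmul (eps \<alpha> j) (gx l d (A ! j))) (rs ! j)) [0..<length A] :: (gbasis \<Rightarrow> 'r) list)
       = map (\<lambda>j. gsmul (eps \<alpha> j ^ (rs ! j)) (gmono l d (\<lambda>k. rs ! j * (if k = A ! j then 1 else 0), id, \<lambda>_. False))) [0..<length A]
"
      by (simp add: gpow_x)
    show ?thesis unfolding eq coef_def Mf_def by (rule gprod_x)
  qed
  then show ?thesis unfolding hpoly_def by simp
qed



lemma calpha_gen:
  assumes "l \<ge> 1" "\<forall>j\<in>set xs. A ! j \<in> {1..d}"
  shows "\<exists>s. (gprod_list l d (map (\<lambda>j. if \<alpha> ! j then gc l d (A ! j) else gone l d) xs) :: gbasis \<Rightarrow> 'r::comm_ring_1)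
     = gsmul s (gmono l d (\<lambda>_. 0, id, \<lambda>k. odd (length (filter (\<lambda>j. \<alpha> ! j \<and> A ! j = k) xs))))"
  using assms(2)
proof (induction xs)
  case Nil
  show ?case unfolding gprod_list_def gone_def by (rule exI[of _ 1]) (simp add: id_def)
next
  case (Cons x xs)
  have "\<forall>j\<in>set xs. A ! j \<in> {1..d}" using Cons.prems by simp
  from Cons.IH[OF this] obtain s where s: "(gprod_list l d (map (\<lambda>j. if \<alpha> ! j then gc l d (A ! j) else gone l d) xs) :: gbasis \<Rightarrow> 'r)
     = gsmul s (gmono l d (\<lambda>_. 0, id, \<lambda>k. odd (length (filter (\<lambda>j. \<alpha> ! j \<and> A ! j = k) xs))))"
    by blast
  have gx: "(if \<alpha> ! x then gc l d (A ! x) else gone l d) = (gmono l d (\<lambda>_. 0, id, \<lambda>k. \<alpha> ! x \<and> A ! x = k) :: gbasis \<Rightarrow> 'r)"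
    unfolding gc_def gone_def by (auto intro!: arg_cong[where f="gmono l d"])
  have o1: "\<forall>i. i \<notin> {1..d} \<longrightarrow> \<not> (\<alpha> ! x \<and> A ! x = i)" using Cons.prems by auto
  have o2: "\<forall>i. i \<notin> {1..d} \<longrightarrow> \<not> odd (length (filter (\<lambda>j. \<alpha> ! j \<and> A ! j = i) xs))"
  proof (intro allI impI)
    fix i assume "i \<notin> {1..d}"
    then have "filter (\<lambda>j. \<alpha> ! j \<and> A ! j = i) xs = []" using Cons.prems by (auto simp: filter_empty_conv)
    then show "\<not> odd (length (filter (\<lambda>j. \<alpha> ! j \<and> A ! j = i) xs))" by simp
  qed
  obtain s' where s': "gmul l d (gmono l d (\<lambda>_. 0, id, \<lambda>k. \<alpha> ! x \<and> A ! x = k) :: gbasis \<Rightarrow> 'r)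
      (gmono l d (\<lambda>_. 0, id, \<lambda>k. odd (length (filter (\<lambda>j. \<alpha> ! j \<and> A ! j = k) xs))))
     = gsmul s' (gmono l d (\<lambda>_. 0, id, \<lambda>k. (\<alpha> ! x \<and> A ! x = k) \<noteq> odd (length (filter (\<lambda>j. \<alpha> ! j \<and> A ! j = k) xs))))"
    using mul_cc[OF assms(1) o1 o2] by blast
  have e: "(\<lambda>k. (\<alpha> ! x \<and> A ! x = k) \<noteq> odd (length (filter (\<lambda>j. \<alpha> ! j \<and> A ! j = k) xs)))
     = (\<lambda>k. odd (length (filter (\<lambda>j. \<alpha> ! j \<and> A ! j = k) (x # xs))))"
    by auto
  show ?case
    apply (rule exI[of _ "s * s'"])
    unfolding gprod_list_def list.map foldr_Cons o_apply
    unfolding gprod_list_def[symmetric] s gx gmul_smul_right s' e gsmul_gsmul by (simp add: mult.commute id_def)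
qed

lemma Xcycle_eq:
  assumes "l \<ge> 1" "distinct A" "set A \<subseteq> {1..d}"
  shows "\<exists>s. (Xcycle l d A r \<alpha> :: gbasis \<Rightarrow> 'r::comm_ring_1) = gsmul s (\<lambda>b. \<Sum>rs\<in>{rs. length rs = length A \<and> sum_list rs = (length A - 1) * (l - 1) + r}.
      gsmul (coef A \<alpha> rs) (gmono l d (Mf A rs, cycle_of_list A,
          \<lambda>k. odd (length (filter (\<lambda>j. \<alpha> ! j \<and> A ! j = k) [0..<length A])))) b)"
proof -
  let ?E = "\<lambda>k. odd (length (filter (\<lambda>j. \<alpha> ! j \<and> A ! j = k) [0..<length A]))"
  have hA: "\<forall>j<length A. A ! j \<in> {1..d}" using assms(3) nth_mem by blast
  then have "\<forall>j\<in>set [0..<length A]. A ! j \<in> {1..d}" by simp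
  from calpha_gen[OF assms(1) this, of \<alpha>] obtain s where
    s: "(calpha l d A \<alpha> :: gbasis \<Rightarrow> 'r) = gsmul s (gmono l d (\<lambda>_. 0, id, ?E))"
    unfolding calpha_def by blast
  have sp: "cycle_of_list A permutes {1..d}"
    using cycle_permutes[of A] assms(3) by (rule permutes_subset)
  have Eo: "\<forall>i. i \<notin> {1..d} \<longrightarrow> \<not> ?E i"
  proof (intro allI impI)
    fix i assume "i \<notin> {1..d}"
    then have "filter (\<lambda>j. \<alpha> ! j \<and> A ! j = i) [0..<length A] = []" using hA
      by (auto simp: filter_empty_conv)
    then show "\<not> ?E i" by simp
  qed
  show ?thesis
    apply (rule exI[of _ s])
    unfolding Xcycle_def hpoly_eq gperm_def s gmul_smul_right
    by (simp add: gmul_sum_left gmul_smul_left mul_perm[OF sp assms(1)] mul_c[OF sp assms(1) Eo])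
qed



lemma sum_list_upt_conv: "sum_list (map f [0..<a]) = (\<Sum>i\<in>{0..<a}. f i)"
  by (simp add: interv_sum_list_conv_sum_set_nat)

lemma prod_list_upt_conv: "prod_list (map f [0..<a]) = (\<Prod>i\<in>{0..<a}. f i)"
  by (induction a) (simp_all add: mult.commute)

lemma Mf_nth:
  assumes "distinct A" "i < length A"
  shows "Mf A rs (A ! i) = rs ! i"
proof -
  have "Mf A rs (A ! i) = (\<Sum>j\<in>{0..<length A}. rs ! j * (if A ! i = A ! j then 1 else 0))"
    unfolding Mf_def sum_list_upt_conv ..
  also have "\<dots> = (\<Sum>j\<in>{0..<length A}. if j = i then rs ! i else 0)"
    using assms by (intro sum.cong) (auto simp: nth_eq_iff_index_eq)
  also have "\<dots> = rs ! i" using assms by simp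
  finally show ?thesis .
qed

lemma Mf_out:
  assumes "k \<notin> set A"
  shows "Mf A rs k = 0"
proof -
  have "Mf A rs k = (\<Sum>j\<in>{0..<length A}. rs ! j * (if k = A ! j then 1 else 0))"
    unfolding Mf_def sum_list_upt_conv ..
  also have "\<dots> = 0"
    using assms by (intro sum.neutral) (auto dest: nth_mem)
  finally show ?thesis .
qed

definition Vn :: "nat list \<Rightarrow> (nat \<Rightarrow> nat) \<Rightarrow> nat \<Rightarrow> nat list" where
  "Vn A n p = map (\<lambda>i. n (A ! i) - (if i = p then 1 else 0)) [0..<length A]"

lemma KE:
  assumes "distinct A" "length rs = length A" "p < length A"
  shows "((\<lambda>k. Mf A rs k + (if k = A ! p then 1 else 0)) = n) \<longleftrightarrow>
    ((\<forall>k. k \<notin> set A \<longrightarrow> n k = 0) \<and> 1 \<le> n (A ! p) \<and> rs = Vn A n p)"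
proof
  assume eq: "(\<lambda>k. Mf A rs k + (if k = A ! p then 1 else 0)) = n"
  have nv: "n k = Mf A rs k + (if k = A ! p then 1 else 0)" for k using eq by auto
  have "A ! p \<in> set A" using assms by simp
  then have "\<forall>k. k \<notin> set A \<longrightarrow> n k = 0" using nv Mf_out by fastforce
  moreover have "1 \<le> n (A ! p)" using nv by simp
  moreover have "rs = Vn A n p"
  proof (rule nth_equalityI)
    show "length rs = length (Vn A n p)" using assms by (simp add: Vn_def)
    fix i assume "i < length rs"
    then have i: "i < length A" using assms by simp
    have "(A ! i = A ! p) = (i = p)" using assms i by (simp add: nth_eq_iff_index_eq)
    then show "rs ! i = Vn A n p ! i"
      using i nv[of "A ! i"] Mf_nth[OF assms(1) i] by (simp add: Vn_def)
  qed
  ultimately show "(\<forall>k. k \<notin> set A \<longrightarrow> n k = 0) \<and> 1 \<le> n (A ! p) \<and> rs = Vn A n p" by blast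
next
  assume h: "(\<forall>k. k \<notin> set A \<longrightarrow> n k = 0) \<and> 1 \<le> n (A ! p) \<and> rs = Vn A n p"
  show "(\<lambda>k. Mf A rs k + (if k = A ! p then 1 else 0)) = n"
  proof
    fix k
    show "Mf A rs k + (if k = A ! p then 1 else 0) = n k"
    proof (cases "k \<in> set A")
      case True
      then obtain i where i: "i < length A" "k = A ! i" by (auto simp: in_set_conv_nth)
      have "(A ! i = A ! p) = (i = p)" using assms i by (simp add: nth_eq_iff_index_eq)
      then show ?thesis using h i Mf_nth[OF assms(1) i(1)] by (auto simp: Vn_def)
    next
      case False
      then have "k \<noteq> A ! p" using assms by auto
      then show ?thesis using h False Mf_out[OF False] by simp
    qed
  qed
qed

lemma finite_RS: "finite {rs. length rs = a \<and> sum_list rs = (N::nat)}"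
proof -
  have "{rs. length rs = a \<and> sum_list rs = N} \<subseteq> {xs. set xs \<subseteq> {0..N} \<and> length xs = a}"
    using member_le_sum_list by fastforce
  then show ?thesis using finite_lists_length_eq[of "{0..N}" a] finite_subset by blast
qed

lemma sum_Vn:
  assumes "p < length A" "1 \<le> n (A ! p)"
  shows "sum_list (Vn A n p) + 1 = (\<Sum>i\<in>{0..<length A}. n (A ! i))"
proof -
  have "sum_list (Vn A n p) + 1 = (\<Sum>i\<in>{0..<length A}. n (A ! i) - (if i = p then 1 else 0))
      + (\<Sum>i\<in>{0..<length A}. if i = p then 1 else 0)"
    using assms unfolding Vn_def sum_list_upt_conv by simp
  also have "\<dots> = (\<Sum>i\<in>{0..<length A}. n (A ! i) - (if i = p then 1 else 0) + (if i = p then 1 else 0))"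
    by (simp add: sum.distrib)
  also have "\<dots> = (\<Sum>i\<in>{0..<length A}. n (A ! i))"
    using assms by (intro sum.cong) auto
  finally show ?thesis .
qed

lemma eval_sum:
  assumes "distinct A" "p < length A" "(n, \<sigma>, E) \<in> gB l d"
  shows "(\<Sum>rs\<in>{rs. length rs = length A \<and> sum_list rs = N}.
       (c rs :: 'r::comm_ring_1) * gmono l d (\<lambda>k. Mf A rs k + (if k = A ! p then 1 else 0), \<sigma>, E) (n, \<sigma>, E))
     = (if (\<forall>k. k \<notin> set A \<longrightarrow> n k = 0) \<and> (\<Sum>i\<in>{0..<length A}. n (A ! i)) = N + 1 \<and> 1 \<le> n (A ! p)
        then c (Vn A n p) else 0)"
proof -
  let ?C = "(\<forall>k. k \<notin> set A \<longrightarrow> n k = 0) \<and> 1 \<le> n (A ! p)"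
  let ?S = "{rs. length rs = length A \<and> sum_list rs = N}"
  have "(\<Sum>rs\<in>?S. c rs * gmono l d (\<lambda>k. Mf A rs k + (if k = A ! p then 1 else 0), \<sigma>, E) (n, \<sigma>, E))
     = (\<Sum>rs\<in>?S. if rs = Vn A n p then (if ?C then c rs else 0) else 0)"
  proof (intro sum.cong refl)
    fix rs assume "rs \<in> ?S"
    then have len: "length rs = length A" by simp
    show "c rs * gmono l d (\<lambda>k. Mf A rs k + (if k = A ! p then 1 else 0), \<sigma>, E) (n, \<sigma>, E)
        = (if rs = Vn A n p then (if ?C then c rs else 0) else 0)"
      using KE[OF assms(1) len assms(2), of n] assms(3) unfolding gmono_def by auto
  qed
  also have "\<dots> = (if Vn A n p \<in> ?S then (if ?C then c (Vn A n p) else 0) else 0)"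
    by (simp add: sum.delta finite_RS)
  also have "\<dots> = (if (\<forall>k. k \<notin> set A \<longrightarrow> n k = 0) \<and> (\<Sum>i\<in>{0..<length A}. n (A ! i)) = N + 1 \<and> 1 \<le> n (A ! p)
        then c (Vn A n p) else 0)"
    using sum_Vn[OF assms(2), of n] by (auto simp: Vn_def)
  finally show ?thesis .
qed

lemma pigeon:
  fixes f :: "nat \<Rightarrow> nat"
  assumes "\<forall>i<a. f i \<le> L" "p < a" "(\<Sum>i\<in>{0..<a}. f i) = (a - 1) * L + r + 1"
  shows "1 \<le> f p"
proof (rule ccontr)
  assume "\<not> 1 \<le> f p"
  then have fp: "f p = 0" by simp
  have "(\<Sum>i\<in>{0..<a}. f i) = f p + (\<Sum>i\<in>{0..<a} - {p}. f i)"
    using assms(2) by (simp add: sum.remove)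
  also have "(\<Sum>i\<in>{0..<a} - {p}. f i) \<le> card ({0..<a} - {p}) * L"
    using sum_bounded_above[of "{0..<a} - {p}" f L] assms(1) by auto
  also have "card ({0..<a} - {p}) = a - 1" using assms(2) by simp
  finally show False using fp assms(3) by simp
qed

lemma eps_sq: "eps \<alpha> j * eps \<alpha> j = (1 :: 'r::comm_ring_1)"
  unfolding eps_def by simp

lemma coef_Vn:
  assumes "p < length A" "1 \<le> n (A ! p)"
  shows "(coef A \<alpha> (Vn A n p) :: 'r::comm_ring_1) = (\<Prod>i\<in>{0..<length A}. eps \<alpha> i ^ n (A ! i)) * eps \<alpha> p"
proof -
  let ?f = "\<lambda>i. (eps \<alpha> i :: 'r) ^ (n (A ! i) - (if i = p then 1 else 0))"
  have "(coef A \<alpha> (Vn A n p) :: 'r) = (\<Prod>i\<in>{0..<length A}. ?f i)"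
    unfolding coef_def prod_list_upt_conv Vn_def by (intro prod.cong) auto
  also have "\<dots> = ?f p * (\<Prod>i\<in>{0..<length A} - {p}. ?f i)"
    using assms by (simp add: prod.remove)
  also have "(\<Prod>i\<in>{0..<length A} - {p}. ?f i) = (\<Prod>i\<in>{0..<length A} - {p}. eps \<alpha> i ^ n (A ! i))"
    by (intro prod.cong) auto
  also have "?f p = (eps \<alpha> p ^ n (A ! p)) * eps \<alpha> p"
  proof -
    obtain k where k: "n (A ! p) = Suc k" using assms(2) by (cases "n (A ! p)") auto
    have "(eps \<alpha> p :: 'r) ^ Suc k * eps \<alpha> p = eps \<alpha> p ^ k * (eps \<alpha> p * eps \<alpha> p)" by (simp add: mult_ac)
    also have "\<dots> = eps \<alpha> p ^ k" by (simp only: eps_sq mult_1_right)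
    finally have h2: "(eps \<alpha> p :: 'r) ^ Suc k * eps \<alpha> p = eps \<alpha> p ^ k" .
    have "?f p = eps \<alpha> p ^ k" using k by simp
    then show ?thesis using h2 k by metis
  qed
  also have "(\<Prod>i\<in>{0..<length A}. eps \<alpha> i ^ n (A ! i)) = (eps \<alpha> p :: 'r) ^ n (A ! p) * (\<Prod>i\<in>{0..<length A} - {p}. eps \<alpha> i ^ n (A ! i))"
    using assms by (simp add: prod.remove)
  ultimately show ?thesis by (simp add: mult_ac)
qed

lemma eps_rot:
  assumes "length \<alpha> = a" "q < a" "even (length (filter id \<alpha>))"
  shows "(-1) ^ (if \<alpha> ! q then 1 else 0) * eps \<alpha> (Suc q mod a) = (eps \<alpha> q :: 'r::comm_ring_1)"
proof -
  have tk: "take (Suc q) \<alpha> = take q \<alpha> @ [\<alpha> ! q]" using assms by (simp add: take_Suc_conv_app_nth)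
  let ?c = "length (filter id (take q \<alpha>))"
  let ?b = "if \<alpha> ! q then 1 else 0 :: nat"
  have cnt: "length (filter id (take (Suc q) \<alpha>)) = ?c + ?b" unfolding tk by simp
  show ?thesis
  proof (cases "Suc q < a")
    case True
    then have "Suc q mod a = Suc q" by simp
    then show ?thesis unfolding eps_def using cnt
      by (simp add: power_add mult.assoc[symmetric] flip: power_add)
  next
    case False
    then have sq: "Suc q = a" using assms by simp
    then have "Suc q mod a = 0" by simp
    moreover have "take (Suc q) \<alpha> = \<alpha>" using sq assms by simp
    ultimately have "even (?c + ?b)" using cnt assms(3) by simp
    then have "((-1::'r) ^ ?b) = (-1) ^ ?c"
      by (cases "\<alpha> ! q") auto
    then show ?thesis unfolding eps_def using \<open>Suc q mod a = 0\<close> by simp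
  qed
qed



theorem mainTheorem10:
  fixes l d r :: nat and A :: "nat list" and \<alpha> :: "bool list"
  assumes "l \<ge> 1" and "d \<ge> 1"
    and "A \<noteq> []" and "distinct A" and "set A \<subseteq> {1..d}"
    and "length \<alpha> = length A" and "even (length (filter id \<alpha>))"
  shows "\<forall>j\<in>{1..d}. gmul l d (Xcycle l d A r \<alpha> :: gbasis \<Rightarrow> 'r::comm_ring_1) (gx l d j)
                    = gmul l d (gx l d j) (Xcycle l d A r \<alpha>)"
proof
  fix j assume j: "j \<in> {1..d}"
  let ?a = "length A"
  let ?\<sigma> = "cycle_of_list A"
  let ?E = "\<lambda>k. odd (length (filter (\<lambda>i. \<alpha> ! i \<and> A ! i = k) [0..<length A]))"
  let ?N = "(length A - 1) * (l - 1) + r"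
  let ?S = "{rs. length rs = length A \<and> sum_list rs = ?N}"
  let ?sg = "(-1) ^ (if ?E j then 1 else 0) :: 'r"
  obtain s where X: "(Xcycle l d A r \<alpha> :: gbasis \<Rightarrow> 'r) = gsmul s (\<lambda>b. \<Sum>rs\<in>?S.
      gsmul (coef A \<alpha> rs) (gmono l d (Mf A rs, ?\<sigma>, ?E)) b)"
    using Xcycle_eq[OF assms(1,4,5), of r \<alpha>, where 'r='r] by blast
  have sp: "?\<sigma> permutes {1..d}"
    using cycle_permutes[of A] assms(5) by (rule permutes_subset)
  have hA: "\<forall>i<length A. A ! i \<in> {1..d}" using assms(5) nth_mem by blast
  have Eo: "\<forall>i. i \<notin> {1..d} \<longrightarrow> \<not> ?E i"
  proof (intro allI impI)
    fix i assume "i \<notin> {1..d}"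
    then have "filter (\<lambda>j. \<alpha> ! j \<and> A ! j = i) [0..<length A] = []" using hA
      by (auto simp: filter_empty_conv)
    then show "\<not> ?E i" by simp
  qed
  have L: "gmul l d (Xcycle l d A r \<alpha> :: gbasis \<Rightarrow> 'r) (gx l d j) = gsmul s (\<lambda>b. \<Sum>rs\<in>?S.
      gsmul (coef A \<alpha> rs) (gsmul ?sg (gmono l d (\<lambda>k. Mf A rs k + (if k = ?\<sigma> j then 1 else 0), ?\<sigma>, ?E))) b)"
    unfolding X gmul_smul_left gmul_sum_left
    by (simp add: gmul_smul_left mul_x_right[OF sp j Eo])
  have R: "gmul l d (gx l d j) (Xcycle l d A r \<alpha> :: gbasis \<Rightarrow> 'r) = gsmul s (\<lambda>b. \<Sum>rs\<in>?S.
      gsmul (coef A \<alpha> rs) (gmono l d (\<lambda>k. Mf A rs k + (if k = j then 1 else 0), ?\<sigma>, ?E)) b)"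
    unfolding X gmul_smul_right gmul_sum_right
    by (simp add: gmul_smul_right mul_x_left[OF sp j Eo])
  have inner: "(\<lambda>b. \<Sum>rs\<in>?S.
      gsmul (coef A \<alpha> rs) (gsmul ?sg (gmono l d (\<lambda>k. Mf A rs k + (if k = ?\<sigma> j then 1 else 0), ?\<sigma>, ?E))) b)
    = (\<lambda>b. \<Sum>rs\<in>?S.
      gsmul (coef A \<alpha> rs) (gmono l d (\<lambda>k. Mf A rs k + (if k = j then 1 else 0), ?\<sigma>, ?E)) b)"
  proof (cases "j \<in> set A")
    case False
    have "?\<sigma> j = j" using False by (rule id_outside_supp)
    moreover have "\<not> ?E j"
    proof -
      have "filter (\<lambda>i. \<alpha> ! i \<and> A ! i = j) [0..<length A] = []" using False
        by (auto simp: filter_empty_conv)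
      then show ?thesis by simp
    qed
    ultimately show ?thesis by simp
  next
    case True
    then obtain q where q: "q < ?a" "j = A ! q" by (auto simp: in_set_conv_nth)
    have apos: "0 < ?a" using assms(3) by simp
    let ?q' = "Suc q mod ?a"
    have q': "?q' < ?a" using apos by simp
    have sj: "?\<sigma> j = A ! ?q'"
    proof -
      have "map (?\<sigma> ^^ 1) A = rotate 1 A" using cyclic_rotation[OF assms(4)] .
      then have "map ?\<sigma> A ! q = rotate1 A ! q" by simp
      then show ?thesis using q by (simp add: nth_rotate1)
    qed
    have Ej: "?E j = \<alpha> ! q"
    proof -
      have "{i. i < length [0..<?a] \<and> (\<alpha> ! ([0..<?a] ! i) \<and> A ! ([0..<?a] ! i) = j)}
          = (if \<alpha> ! q then {q} else {})"
        using q assms(4) by (auto simp: nth_eq_iff_index_eq)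
      then have "length (filter (\<lambda>i. \<alpha> ! i \<and> A ! i = j) [0..<?a]) = (if \<alpha> ! q then 1 else 0)"
        by (simp add: length_filter_conv_card)
      then show ?thesis by simp
    qed
    show ?thesis
    proof
      fix b :: gbasis
      obtain n w e where b: "b = (n, w, e)" by (cases b) auto
      show "(\<Sum>rs\<in>?S. gsmul (coef A \<alpha> rs) (gsmul ?sg (gmono l d (\<lambda>k. Mf A rs k + (if k = ?\<sigma> j then 1 else 0), ?\<sigma>, ?E))) b)
         = (\<Sum>rs\<in>?S. gsmul (coef A \<alpha> rs) (gmono l d (\<lambda>k. Mf A rs k + (if k = j then 1 else 0), ?\<sigma>, ?E)) b)"
      proof (cases "w = ?\<sigma> \<and> e = ?E \<and> (n, ?\<sigma>, ?E) \<in> gB l d")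
        case False
        have z: "(gmono l d (m, ?\<sigma>, ?E) :: gbasis \<Rightarrow> 'r) b = 0" for m
          using False b unfolding gmono_def by auto
        show ?thesis unfolding gsmul_def z by simp
      next
        case True
        then have bg: "(n, ?\<sigma>, ?E) \<in> gB l d" and b': "b = (n, ?\<sigma>, ?E)" using b by auto
        have nl: "\<forall>i<?a. n (A ! i) \<le> l - 1"
          using bg hA unfolding gB_iff by (metis Suc_pred' assms(1) less_Suc_eq_le less_le_trans zero_less_one)
        let ?C = "(\<forall>k. k \<notin> set A \<longrightarrow> n k = 0) \<and> (\<Sum>i\<in>{0..<length A}. n (A ! i)) = ?N + 1"
        have lhs: "(\<Sum>rs\<in>?S. gsmul (coef A \<alpha> rs) (gsmul ?sg (gmono l d (\<lambda>k. Mf A rs k + (if k = ?\<sigma> j then 1 else 0), ?\<sigma>, ?E))) b)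
           = (if ?C \<and> 1 \<le> n (A ! ?q') then coef A \<alpha> (Vn A n ?q') * ?sg else 0)"
        proof -
          have "(\<Sum>rs\<in>?S. gsmul (coef A \<alpha> rs) (gsmul ?sg (gmono l d (\<lambda>k. Mf A rs k + (if k = ?\<sigma> j then 1 else 0), ?\<sigma>, ?E))) b)
             = (\<Sum>rs\<in>?S. (coef A \<alpha> rs * ?sg) * gmono l d (\<lambda>k. Mf A rs k + (if k = A ! ?q' then 1 else 0), ?\<sigma>, ?E) (n, ?\<sigma>, ?E))"
            unfolding b' sj gsmul_def by (simp add: mult_ac)
          also have "\<dots> = (if ?C \<and> 1 \<le> n (A ! ?q') then coef A \<alpha> (Vn A n ?q') * ?sg else 0)"
            using eval_sum[OF assms(4) q' bg, where N="?N" and c="\<lambda>rs. coef A \<alpha> rs * ?sg"] by simp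
          finally show ?thesis .
        qed
        have rhs: "(\<Sum>rs\<in>?S. gsmul (coef A \<alpha> rs) (gmono l d (\<lambda>k. Mf A rs k + (if k = j then 1 else 0), ?\<sigma>, ?E)) b)
           = (if ?C \<and> 1 \<le> n (A ! q) then coef A \<alpha> (Vn A n q) else 0)"
          unfolding b' q(2) gsmul_def
          using eval_sum[OF assms(4) q(1) bg, where N="?N" and c="coef A \<alpha>"] by simp
        show ?thesis
        proof (cases ?C)
          case False
          have n1: "\<not> (?C \<and> 1 \<le> n (A ! ?q'))" using False by blast
          have n2: "\<not> (?C \<and> 1 \<le> n (A ! q))" using False by blast
          show ?thesis unfolding lhs rhs if_not_P[OF n1] if_not_P[OF n2] ..
        next
          case True
          then have sumN: "(\<Sum>i\<in>{0..<?a}. n (A ! i)) = (?a - 1) * (l - 1) + r + 1" by simp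
          have p1: "1 \<le> n (A ! q)" using pigeon[OF nl q(1) sumN] .
          have p2: "1 \<le> n (A ! ?q')" using pigeon[OF nl q' sumN] .
          let ?K = "(\<Prod>i\<in>{0..<length A}. eps \<alpha> i ^ n (A ! i)) :: 'r"
          have c1: "(coef A \<alpha> (Vn A n ?q') :: 'r) = ?K * eps \<alpha> ?q'" by (rule coef_Vn) (use q' p2 in auto)
          have c2: "(coef A \<alpha> (Vn A n q) :: 'r) = ?K * eps \<alpha> q" by (rule coef_Vn) (use q(1) p1 in auto)
          have sg: "?sg = (-1) ^ (if \<alpha> ! q then 1 else 0)" using Ej by simp
          have er: "(-1) ^ (if \<alpha> ! q then 1 else 0) * eps \<alpha> ?q' = (eps \<alpha> q :: 'r)"
            by (rule eps_rot[OF assms(6) q(1) assms(7)])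
          have key: "coef A \<alpha> (Vn A n ?q') * ?sg = (coef A \<alpha> (Vn A n q) :: 'r)"
            unfolding c1 c2 sg er[symmetric] by (simp add: mult_ac)
          show ?thesis unfolding lhs rhs using True p1 p2 key by simp
        qed
      qed
    qed
  qed
  show "gmul l d (Xcycle l d A r \<alpha> :: gbasis \<Rightarrow> 'r) (gx l d j) = gmul l d (gx l d j) (Xcycle l d A r \<alpha>)"
    unfolding L R inner ..
qed

end
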